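(* Let $a_1,a_2,\gamma_1,\zeta\in\mathbb R$ with $a_1,a_2\neq0$, $|a_1|\neq|a_2|$, and consider the equation $\mathcal Q_+=0$ with coefficients $\alpha_1=\beta_1=\dfrac{(a_1+a_2)\gamma_1}{2a_1}$, $\alpha_2=\beta_2=0$, $\gamma_2=\dfrac{a_2\gamma_1}{a_1}$, $\xi_1=\xi_2=\dfrac{3(a_1+a_2)\gamma_1^2}{8a_1^2}$, $\xi_3=\xi_4=\dfrac{(a_1-a_2)\gamma_1^2}{8a_1^2}$. This equation can be linearized by a real Möbius transformation $u_{n,m}=\dfrac{\alpha v_{n,m}+\beta}{\gamma v_{n,m}+\delta}$ (applied simultaneously at all lattice points, $\alpha\delta-\beta\gamma\neq0$) into the linear equation $$v_{n,m}+v_{n+1,m+1}+\frac{a_2}{a_1}\big(v_{n+1,m}+v_{n,m+1}\big)=0$$ if and only if $\zeta=\dfrac{(a_1+a_2)\gamma_1^3}{4a_1^3}$. In that case a linearizing transformation is given by $\beta=0$, $\gamma=-\dfrac{\alpha\gamma_1}{2a_1}$ (with $\alpha,\delta\neq0$ arbitrary).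
   Context: Let $u:\mathbb Z^2\to\mathbb R$. The equation $\mathcal Q_+=0$ is $a_1(u_{n,m}+u_{n+1,m+1})+a_2(u_{n+1,m}+u_{n,m+1})+(\alpha_1-\alpha_2)u_{n,m}u_{n+1,m}+(\alpha_1+\alpha_2)u_{n,m+1}u_{n+1,m+1}+(\beta_1-\beta_2)u_{n,m}u_{n,m+1}+(\beta_1+\beta_2)u_{n+1,m}u_{n+1,m+1}+\gamma_1u_{n,m}u_{n+1,m+1}+\gamma_2u_{n+1,m}u_{n,m+1}+(\xi_1-\xi_3)u_{n,m}u_{n+1,m}u_{n,m+1}+(\xi_1+\xi_3)u_{n,m}u_{n+1,m}u_{n+1,m+1}+(\xi_2-\xi_4)u_{n+1,m}u_{n,m+1}u_{n+1,m+1}+(\xi_2+\xi_4)u_{n,m}u_{n,m+1}u_{n+1,m+1}+\zeta u_{n,m}u_{n+1,m}u_{n,m+1}u_{n+1,m+1}=0$. "Linearized by the Möbius transformation into the linear equation" means: substituting $u_{k,l}=(\alpha v_{k,l}+\beta)/(\gamma v_{k,l}+\delta)$ for the four lattice values and multiplying by the product of the four denominators yields a nonzero constant multiple of the stated linear equation in $v$. *)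

theory Defs
  imports Complex_Main
begin

text \<open>Left-hand side of Q_+ = 0 with x = u(n,m), y = u(n+1,m), z = u(n,m+1), w = u(n+1,m+1).\<close>
definition Qplus ::
  "real \<Rightarrow> real \<Rightarrow> real \<Rightarrow> real \<Rightarrow> real \<Rightarrow> real \<Rightarrow> real \<Rightarrow> real \<Rightarrow> real \<Rightarrow> real \<Rightarrow> real \<Rightarrow> real \<Rightarrow> real
   \<Rightarrow> real \<Rightarrow> real \<Rightarrow> real \<Rightarrow> real \<Rightarrow> real" where
  "Qplus a1 a2 al1 al2 be1 be2 ga1 ga2 xi1 xi2 xi3 xi4 ze x y z w =
     a1 * (x + w) + a2 * (y + z)
     + (al1 - al2) * x * y + (al1 + al2) * z * w
     + (be1 - be2) * x * z + (be1 + be2) * y * w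
     + ga1 * x * w + ga2 * y * z
     + (xi1 - xi3) * x * y * z + (xi1 + xi3) * x * y * w
     + (xi2 - xi4) * y * z * w + (xi2 + xi4) * x * z * w
     + ze * x * y * z * w"

definition moeb :: "real \<Rightarrow> real \<Rightarrow> real \<Rightarrow> real \<Rightarrow> real \<Rightarrow> real" where
  "moeb A B C D v = (A * v + B) / (C * v + D)"

definition linearizes ::
  "(real \<Rightarrow> real \<Rightarrow> real \<Rightarrow> real \<Rightarrow> real) \<Rightarrow> (real \<Rightarrow> real \<Rightarrow> real \<Rightarrow> real \<Rightarrow> real)
   \<Rightarrow> real \<Rightarrow> real \<Rightarrow> real \<Rightarrow> real \<Rightarrow> bool" where
  "linearizes Q L A B C D \<longleftrightarrow>
     (\<exists>c::real. c \<noteq> 0 \<and>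
       (\<forall>v1 v2 v3 v4. C * v1 + D \<noteq> 0 \<longrightarrow> C * v2 + D \<noteq> 0 \<longrightarrow> C * v3 + D \<noteq> 0 \<longrightarrow> C * v4 + D \<noteq> 0 \<longrightarrow>
          (C * v1 + D) * (C * v2 + D) * (C * v3 + D) * (C * v4 + D) *
            Q (moeb A B C D v1) (moeb A B C D v2) (moeb A B C D v3) (moeb A B C D v4)
          = c * L v1 v2 v3 v4))"

end

theory Submission imports Defs begin

definition Qh :: "real \<Rightarrow> real \<Rightarrow> real \<Rightarrow> real \<Rightarrow> real \<Rightarrow> real \<Rightarrow> real \<Rightarrow> real \<Rightarrow> real \<Rightarrow> real \<Rightarrow> real \<Rightarrow> real \<Rightarrow> real
   \<Rightarrow> real \<Rightarrow> real \<Rightarrow> real \<Rightarrow> real \<Rightarrow> real \<Rightarrow> real \<Rightarrow> real \<Rightarrow> real \<Rightarrow> real" where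
  "Qh a1 a2 al1 al2 be1 be2 ga1 ga2 xi1 xi2 xi3 xi4 ze x1 x0 y1 y0 z1 z0 w1 w0 =
     a1 * (x1*y0*z0*w0 + x0*y0*z0*w1) + a2 * (x0*y1*z0*w0 + x0*y0*z1*w0)
     + (al1 - al2) * x1*y1*z0*w0 + (al1 + al2) * x0*y0*z1*w1
     + (be1 - be2) * x1*y0*z1*w0 + (be1 + be2) * x0*y1*z0*w1
     + ga1 * x1*y0*z0*w1 + ga2 * x0*y1*z1*w0
     + (xi1 - xi3) * x1*y1*z1*w0 + (xi1 + xi3) * x1*y1*z0*w1
     + (xi2 - xi4) * x0*y1*z1*w1 + (xi2 + xi4) * x1*y0*z1*w1
     + ze * x1*y1*z1*w1"

lemma Qh_hom:
  assumes "x0 \<noteq> 0" "y0 \<noteq> 0" "z0 \<noteq> 0" "w0 \<noteq> 0"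
  shows "x0*y0*z0*w0 * Qplus a1 a2 al1 al2 be1 be2 ga1 ga2 xi1 xi2 xi3 xi4 ze (x1/x0) (y1/y0) (z1/z0) (w1/w0)
   = Qh a1 a2 al1 al2 be1 be2 ga1 ga2 xi1 xi2 xi3 xi4 ze x1 x0 y1 y0 z1 z0 w1 w0"
  using assms by (simp add: Qplus_def Qh_def field_simps)

lemma lin1: "Qh a1 a2 al1 al2 be1 be2 ga1 ga2 xi1 xi2 xi3 xi4 ze (p*x1+q*y1) (p*x0+q*y0) z1 z0 w1 w0 u1 u0
  = p * Qh a1 a2 al1 al2 be1 be2 ga1 ga2 xi1 xi2 xi3 xi4 ze x1 x0 z1 z0 w1 w0 u1 u0
  + q * Qh a1 a2 al1 al2 be1 be2 ga1 ga2 xi1 xi2 xi3 xi4 ze y1 y0 z1 z0 w1 w0 u1 u0"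
  by (simp add: Qh_def algebra_simps)
lemma lin2: "Qh a1 a2 al1 al2 be1 be2 ga1 ga2 xi1 xi2 xi3 xi4 ze z1 z0 (p*x1+q*y1) (p*x0+q*y0) w1 w0 u1 u0
  = p * Qh a1 a2 al1 al2 be1 be2 ga1 ga2 xi1 xi2 xi3 xi4 ze z1 z0 x1 x0 w1 w0 u1 u0
  + q * Qh a1 a2 al1 al2 be1 be2 ga1 ga2 xi1 xi2 xi3 xi4 ze z1 z0 y1 y0 w1 w0 u1 u0"
  by (simp add: Qh_def algebra_simps)
lemma lin3: "Qh a1 a2 al1 al2 be1 be2 ga1 ga2 xi1 xi2 xi3 xi4 ze z1 z0 w1 w0 (p*x1+q*y1) (p*x0+q*y0) u1 u0
  = p * Qh a1 a2 al1 al2 be1 be2 ga1 ga2 xi1 xi2 xi3 xi4 ze z1 z0 w1 w0 x1 x0 u1 u0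
  + q * Qh a1 a2 al1 al2 be1 be2 ga1 ga2 xi1 xi2 xi3 xi4 ze z1 z0 w1 w0 y1 y0 u1 u0"
  by (simp add: Qh_def algebra_simps)
lemma lin4: "Qh a1 a2 al1 al2 be1 be2 ga1 ga2 xi1 xi2 xi3 xi4 ze z1 z0 w1 w0 u1 u0 (p*x1+q*y1) (p*x0+q*y0)
  = p * Qh a1 a2 al1 al2 be1 be2 ga1 ga2 xi1 xi2 xi3 xi4 ze z1 z0 w1 w0 u1 u0 x1 x0
  + q * Qh a1 a2 al1 al2 be1 be2 ga1 ga2 xi1 xi2 xi3 xi4 ze z1 z0 w1 w0 u1 u0 y1 y0"
  by (simp add: Qh_def algebra_simps)

lemma aff: "(s1::real) \<noteq> s2 \<Longrightarrow> s1*a+b = s1*a'+b' \<Longrightarrow> s2*a+b = s2*a'+b' \<Longrightarrow> a = a' \<and> b = b'"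
proof -
  assume h: "s1 \<noteq> s2" "s1*a+b = s1*a'+b'" "s2*a+b = s2*a'+b'"
  then have "(s1 - s2) * (a - a') = 0" by (simp add: algebra_simps)
  with h show ?thesis by auto
qed


lemma extr_aff:
  assumes "(s1::real) \<noteq> s2" "C*s1+D \<noteq> 0" "C*s2+D \<noteq> 0"
    and "\<forall>v. C*v+D \<noteq> 0 \<longrightarrow> v*a+b = v*a'+b'"
  shows "a = a' \<and> b = b'"
  using aff[of s1 s2 a b a' b'] assms by auto

context
  fixes k1 k2 k3 k4 k5 k6 k7 k8 k9 k10 k11 k12 k13 :: real
begin

abbreviation "H \<equiv> Qh k1 k2 k3 k4 k5 k6 k7 k8 k9 k10 k11 k12 k13"

lemma linv1: "H (A*v+B) (C*v+D) y1 y0 z1 z0 w1 w0 = v * H A C y1 y0 z1 z0 w1 w0 + H B D y1 y0 z1 z0 w1 w0"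
  by (simp add: Qh_def algebra_simps)
lemma linv2: "H x1 x0 (A*v+B) (C*v+D) z1 z0 w1 w0 = v * H x1 x0 A C z1 z0 w1 w0 + H x1 x0 B D z1 z0 w1 w0"
  by (simp add: Qh_def algebra_simps)
lemma linv3: "H x1 x0 y1 y0 (A*v+B) (C*v+D) w1 w0 = v * H x1 x0 y1 y0 A C w1 w0 + H x1 x0 y1 y0 B D w1 w0"
  by (simp add: Qh_def algebra_simps)
lemma linv4: "H x1 x0 y1 y0 z1 z0 (A*v+B) (C*v+D) = v * H x1 x0 y1 y0 z1 z0 A C + H x1 x0 y1 y0 z1 z0 B D"
  by (simp add: Qh_def algebra_simps)

lemma nec_gen:
  assumes det: "A*D - B*C \<noteq> 0" and s: "s1 \<noteq> s2" "C*s1+D \<noteq> 0" "C*s2+D \<noteq> 0"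
    and hyp: "\<forall>v1 v2 v3 v4. C*v1+D \<noteq> 0 \<longrightarrow> C*v2+D \<noteq> 0 \<longrightarrow> C*v3+D \<noteq> 0 \<longrightarrow> C*v4+D \<noteq> 0 \<longrightarrow>
       H (A*v1+B) (C*v1+D) (A*v2+B) (C*v2+D) (A*v3+B) (C*v3+D) (A*v4+B) (C*v4+D)
        = c * (v1 + v4 + r * (v2 + v3))"
  shows "H A C A C 0 1 0 1 = 0 \<and> H A C A C 1 0 1 0 = 0 \<and> H 1 0 A C A C A C = 0"
proof -
  have L1: "H A C (A*v2+B) (C*v2+D) (A*v3+B) (C*v3+D) (A*v4+B) (C*v4+D) = c
          \<and> H B D (A*v2+B) (C*v2+D) (A*v3+B) (C*v3+D) (A*v4+B) (C*v4+D) = c*(v4 + r*(v2+v3))"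
    if g: "C*v2+D \<noteq> 0" "C*v3+D \<noteq> 0" "C*v4+D \<noteq> 0" for v2 v3 v4
  proof (rule extr_aff[OF s])
    show "\<forall>v. C*v+D \<noteq> 0 \<longrightarrow> v * H A C (A*v2+B) (C*v2+D) (A*v3+B) (C*v3+D) (A*v4+B) (C*v4+D)
        + H B D (A*v2+B) (C*v2+D) (A*v3+B) (C*v3+D) (A*v4+B) (C*v4+D) = v*c + c*(v4 + r*(v2+v3))"
    proof (intro allI impI)
      fix v assume "C*v+D \<noteq> 0"
      then have h: "H (A*v+B) (C*v+D) (A*v2+B) (C*v2+D) (A*v3+B) (C*v3+D) (A*v4+B) (C*v4+D)
        = c * (v + v4 + r * (v2 + v3))" using hyp g by blast
      show "v * H A C (A*v2+B) (C*v2+D) (A*v3+B) (C*v3+D) (A*v4+B) (C*v4+D)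
        + H B D (A*v2+B) (C*v2+D) (A*v3+B) (C*v3+D) (A*v4+B) (C*v4+D) = v*c + c*(v4 + r*(v2+v3))"
        using h unfolding linv1 by (simp add: algebra_simps)
    qed
  qed
  have L2: "H A C A C (A*v3+B) (C*v3+D) (A*v4+B) (C*v4+D) = 0
          \<and> H A C B D (A*v3+B) (C*v3+D) (A*v4+B) (C*v4+D) = c"
    if g: "C*v3+D \<noteq> 0" "C*v4+D \<noteq> 0" for v3 v4
  proof (rule extr_aff[OF s])
    show "\<forall>v. C*v+D \<noteq> 0 \<longrightarrow> v * H A C A C (A*v3+B) (C*v3+D) (A*v4+B) (C*v4+D)
        + H A C B D (A*v3+B) (C*v3+D) (A*v4+B) (C*v4+D) = v*0 + c"
      using L1 g unfolding linv2 by simp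
  qed
  have L2': "H B D A C (A*v3+B) (C*v3+D) (A*v4+B) (C*v4+D) = c*r
          \<and> H B D B D (A*v3+B) (C*v3+D) (A*v4+B) (C*v4+D) = c*(v4+r*v3)"
    if g: "C*v3+D \<noteq> 0" "C*v4+D \<noteq> 0" for v3 v4
  proof (rule extr_aff[OF s])
    show "\<forall>v. C*v+D \<noteq> 0 \<longrightarrow> v * H B D A C (A*v3+B) (C*v3+D) (A*v4+B) (C*v4+D)
        + H B D B D (A*v3+B) (C*v3+D) (A*v4+B) (C*v4+D) = v*(c*r) + c*(v4+r*v3)"
    proof (intro allI impI)
      fix v assume "C*v+D \<noteq> 0"
      then have h: "H B D (A*v+B) (C*v+D) (A*v3+B) (C*v3+D) (A*v4+B) (C*v4+D) = c*(v4 + r*(v+v3))"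
        using L1 g by blast
      show "v * H B D A C (A*v3+B) (C*v3+D) (A*v4+B) (C*v4+D)
        + H B D B D (A*v3+B) (C*v3+D) (A*v4+B) (C*v4+D) = v*(c*r) + c*(v4+r*v3)"
        using h unfolding linv2 by (simp add: algebra_simps)
    qed
  qed
  have L3: "H A C A C A C (A*v4+B) (C*v4+D) = 0 \<and> H A C A C B D (A*v4+B) (C*v4+D) = 0"
    if g: "C*v4+D \<noteq> 0" for v4
  proof (rule extr_aff[OF s])
    show "\<forall>v. C*v+D \<noteq> 0 \<longrightarrow> v * H A C A C A C (A*v4+B) (C*v4+D)
        + H A C A C B D (A*v4+B) (C*v4+D) = v*0 + 0"
      using L2 g unfolding linv3 by simp
  qed
  have L3': "H B D A C A C (A*v4+B) (C*v4+D) = 0 \<and> H B D A C B D (A*v4+B) (C*v4+D) = c*r"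
    if g: "C*v4+D \<noteq> 0" for v4
  proof (rule extr_aff[OF s])
    show "\<forall>v. C*v+D \<noteq> 0 \<longrightarrow> v * H B D A C A C (A*v4+B) (C*v4+D)
        + H B D A C B D (A*v4+B) (C*v4+D) = v*0 + c*r"
      using L2' g unfolding linv3 by simp
  qed
  have "H A C A C A C A C = 0 \<and> H A C A C A C B D = 0"
    by (rule extr_aff[OF s]) (use L3 in \<open>simp add: linv4\<close>)
  moreover have "H A C A C B D A C = 0 \<and> H A C A C B D B D = 0"
    by (rule extr_aff[OF s]) (use L3 in \<open>simp add: linv4\<close>)
  moreover have "H B D A C A C A C = 0 \<and> H B D A C A C B D = 0"
    by (rule extr_aff[OF s]) (use L3' in \<open>simp add: linv4\<close>)
  ultimately have K: "H A C A C A C A C = 0" "H A C A C A C B D = 0" "H A C A C B D A C = 0"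
      "H A C A C B D B D = 0" "H B D A C A C A C = 0" by auto
  define dd where "dd = A*D - B*C"
  have dd: "dd \<noteq> 0" using det dd_def by simp
  define al where "al = - B / dd"
  define be where "be = A / dd"
  have z1: "al*A + be*B = 0" unfolding al_def be_def using dd by (simp add: field_simps)
  have "al*C + be*D = (A*D - B*C) / dd" unfolding al_def be_def using dd by (simp add: field_simps)
  then have z2: "al*C + be*D = 1" using dd dd_def by simp
  have "H A C A C (al*A + be*B) (al*C + be*D) (al*A + be*B) (al*C + be*D) = 0"
    unfolding lin3 lin4 using K by simp
  then have E1: "H A C A C 0 1 0 1 = 0" unfolding z1 z2 .
  define al' where "al' = D / dd"
  define be' where "be' = - C / dd"
  have "al'*A + be'*B = (A*D - B*C) / dd" unfolding al'_def be'_def using dd by (simp add: field_simps)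
  then have z1': "al'*A + be'*B = 1" using dd dd_def by simp
  have z2': "al'*C + be'*D = 0" unfolding al'_def be'_def using dd by (simp add: field_simps)
  have "H A C A C (al'*A + be'*B) (al'*C + be'*D) (al'*A + be'*B) (al'*C + be'*D) = 0"
    unfolding lin3 lin4 using K by simp
  then have E2: "H A C A C 1 0 1 0 = 0" unfolding z1' z2' .
  have "H (al'*A + be'*B) (al'*C + be'*D) A C A C A C = 0"
    unfolding lin1 using K by simp
  then have E3: "H 1 0 A C A C A C = 0" unfolding z1' z2' .
  show ?thesis using E1 E2 E3 by simp
qed

end

theorem mainTheorem5:
  fixes a1 a2 ga1 ze :: real
  assumes "a1 \<noteq> 0" and "a2 \<noteq> 0" and "\<bar>a1\<bar> \<noteq> \<bar>a2\<bar>"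
  defines "Q \<equiv> Qplus a1 a2
              ((a1 + a2) * ga1 / (2 * a1)) 0 ((a1 + a2) * ga1 / (2 * a1)) 0
              ga1 (a2 * ga1 / a1)
              (3 * (a1 + a2) * ga1^2 / (8 * a1^2)) (3 * (a1 + a2) * ga1^2 / (8 * a1^2))
              ((a1 - a2) * ga1^2 / (8 * a1^2)) ((a1 - a2) * ga1^2 / (8 * a1^2))
              ze"
    and "L \<equiv> (\<lambda>v1 v2 v3 v4. v1 + v4 + a2 / a1 * (v2 + v3))"
  shows "((\<exists>A B C D. A * D - B * C \<noteq> 0 \<and> linearizes Q L A B C D)
           \<longleftrightarrow> ze = (a1 + a2) * ga1^3 / (4 * a1^3))
         \<and> (ze = (a1 + a2) * ga1^3 / (4 * a1^3) \<longrightarrow>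
              (\<forall>A D. A \<noteq> 0 \<longrightarrow> D \<noteq> 0 \<longrightarrow> linearizes Q L A 0 (- A * ga1 / (2 * a1)) D))"
proof -
  have a12: "a1 + a2 \<noteq> 0"
  proof
    assume "a1 + a2 = 0"
    then have "a2 = - a1" by simp
    then show False using assms(3) by simp
  qed
  define al where "al = (a1 + a2) * ga1 / (2 * a1)"
  define x2 where "x2 = 3 * (a1 + a2) * ga1^2 / (8 * a1^2)"
  define x4 where "x4 = (a1 - a2) * ga1^2 / (8 * a1^2)"
  define g2 where "g2 = a2 * ga1 / a1"
  have Qe: "Q = Qplus a1 a2 al 0 al 0 ga1 g2 x2 x2 x4 x4 ze"
    unfolding Q_def al_def x2_def x4_def g2_def ..
  have S: "linearizes Q L A 0 (- A * ga1 / (2 * a1)) D"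
    if zz: "ze = (a1 + a2) * ga1^3 / (4 * a1^3)" and A: "A \<noteq> 0" and D: "D \<noteq> 0" for A D
  proof -
    define C where "C = - A * ga1 / (2 * a1)"
    have "linearizes Q L A 0 C D"
      unfolding linearizes_def
    proof (intro exI[of _ "a1*A*D^3"] conjI allI impI)
      show "a1*A*D^3 \<noteq> 0" using A D assms(1) by simp
      fix v1 v2 v3 v4
      assume g: "C*v1+D \<noteq> 0" "C*v2+D \<noteq> 0" "C*v3+D \<noteq> 0" "C*v4+D \<noteq> 0"
      have "(C*v1+D) * (C*v2+D) * (C*v3+D) * (C*v4+D) *
            Q (moeb A 0 C D v1) (moeb A 0 C D v2) (moeb A 0 C D v3) (moeb A 0 C D v4)
          = Qh a1 a2 al 0 al 0 ga1 g2 x2 x2 x4 x4 ze (A*v1+0) (C*v1+D) (A*v2+0) (C*v2+D)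
              (A*v3+0) (C*v3+D) (A*v4+0) (C*v4+D)"
        unfolding Qe moeb_def by (rule Qh_hom[OF g])
      also have "\<dots> = a1*A*D^3 * L v1 v2 v3 v4"
        unfolding L_def Qh_def al_def x2_def x4_def g2_def C_def zz using assms(1)
        by (simp add: field_simps power2_eq_square power3_eq_cube)
      finally show "(C*v1+D) * (C*v2+D) * (C*v3+D) * (C*v4+D) *
            Q (moeb A 0 C D v1) (moeb A 0 C D v2) (moeb A 0 C D v3) (moeb A 0 C D v4)
          = a1*A*D^3 * L v1 v2 v3 v4" .
    qed
    then show ?thesis unfolding C_def .
  qed
  have N: "ze = (a1 + a2) * ga1^3 / (4 * a1^3)"
    if det: "A * D - B * C \<noteq> 0" and lin: "linearizes Q L A B C D" for A B C D
  proof -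
    obtain c where c: "c \<noteq> 0" and hc: "\<forall>v1 v2 v3 v4. C * v1 + D \<noteq> 0 \<longrightarrow> C * v2 + D \<noteq> 0 \<longrightarrow> C * v3 + D \<noteq> 0 \<longrightarrow> C * v4 + D \<noteq> 0 \<longrightarrow>
          (C * v1 + D) * (C * v2 + D) * (C * v3 + D) * (C * v4 + D) *
            Q (moeb A B C D v1) (moeb A B C D v2) (moeb A B C D v3) (moeb A B C D v4)
          = c * L v1 v2 v3 v4"
      using lin unfolding linearizes_def by blast
    have hyp: "\<forall>v1 v2 v3 v4. C*v1+D \<noteq> 0 \<longrightarrow> C*v2+D \<noteq> 0 \<longrightarrow> C*v3+D \<noteq> 0 \<longrightarrow> C*v4+D \<noteq> 0 \<longrightarrow>
       Qh a1 a2 al 0 al 0 ga1 g2 x2 x2 x4 x4 ze (A*v1+B) (C*v1+D) (A*v2+B) (C*v2+D) (A*v3+B) (C*v3+D) (A*v4+B) (C*v4+D)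
        = c * (v1 + v4 + (a2/a1) * (v2 + v3))"
    proof (intro allI impI)
      fix v1 v2 v3 v4
      assume g: "C*v1+D \<noteq> 0" "C*v2+D \<noteq> 0" "C*v3+D \<noteq> 0" "C*v4+D \<noteq> 0"
      have "Qh a1 a2 al 0 al 0 ga1 g2 x2 x2 x4 x4 ze (A*v1+B) (C*v1+D) (A*v2+B) (C*v2+D) (A*v3+B) (C*v3+D) (A*v4+B) (C*v4+D)
        = (C * v1 + D) * (C * v2 + D) * (C * v3 + D) * (C * v4 + D) *
            Q (moeb A B C D v1) (moeb A B C D v2) (moeb A B C D v3) (moeb A B C D v4)"
        unfolding Qe moeb_def by (rule Qh_hom[OF g, symmetric])
      also have "\<dots> = c * L v1 v2 v3 v4" using hc g by blast
      finally show "Qh a1 a2 al 0 al 0 ga1 g2 x2 x2 x4 x4 ze (A*v1+B) (C*v1+D) (A*v2+B) (C*v2+D) (A*v3+B) (C*v3+D) (A*v4+B) (C*v4+D)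
        = c * (v1 + v4 + (a2/a1) * (v2 + v3))" unfolding L_def .
    qed
    obtain s1 s2 :: real where s: "s1 \<noteq> s2" "C*s1+D \<noteq> 0" "C*s2+D \<noteq> 0"
    proof (cases "C = 0")
      case True
      then have "D \<noteq> 0" using det by auto
      then show ?thesis using that[of 0 1] True by simp
    next
      case False
      show ?thesis using that[of "-D/C+1" "-D/C+2"] False by (simp add: field_simps)
    qed
    have E: "Qh a1 a2 al 0 al 0 ga1 g2 x2 x2 x4 x4 ze A C A C 0 1 0 1 = 0 \<and>
             Qh a1 a2 al 0 al 0 ga1 g2 x2 x2 x4 x4 ze A C A C 1 0 1 0 = 0 \<and>
             Qh a1 a2 al 0 al 0 ga1 g2 x2 x2 x4 x4 ze 1 0 A C A C A C = 0"
      by (rule nec_gen[OF det s hyp])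
    then have E1: "(a1 + a2) * A * C + al * A * A = 0"
      and E2: "al * C * C + 2 * x2 * A * C + ze * A * A = 0"
      and E3: "Qh a1 a2 al 0 al 0 ga1 g2 x2 x2 x4 x4 ze 1 0 A C A C A C = 0"
      by (simp_all add: Qh_def algebra_simps)
    show ?thesis
    proof (cases "A = 0")
      case True
      then have "C \<noteq> 0" using det by auto
      with E2 True have "al = 0" by simp
      then have "ga1 = 0" unfolding al_def using a12 assms(1) by simp
      with E3 True have "a1 * C * C * C = 0" by (simp add: Qh_def)
      with \<open>C \<noteq> 0\<close> assms(1) show ?thesis by simp
    next
      case False
      have "A * ((a1 + a2) * C + al * A) = 0" using E1 by (simp add: algebra_simps)
      then have "(a1 + a2) * C + al * A = 0" using False by simp
      then have "(a1 + a2) * (A * ga1 + 2 * a1 * C) = 0" unfolding al_def using a12 assms(1)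
        by (simp add: field_simps)
      then have "A * ga1 + 2 * a1 * C = 0" using a12 by simp
      then have Cv: "C = - A * ga1 / (2 * a1)" using assms(1)
        by (simp add: field_simps)
      have "ze * A * A = - (al * C * C + 2 * x2 * A * C)" using E2 by simp
      also have "\<dots> = (a1 + a2) * ga1^3 / (4 * a1^3) * A * A"
        unfolding Cv al_def x2_def using assms(1) by (simp add: field_simps power2_eq_square power3_eq_cube)
      finally have "(ze - (a1 + a2) * ga1^3 / (4 * a1^3)) * (A * A) = 0" by (simp add: algebra_simps)
      then show ?thesis using False by simp
    qed
  qed
  show ?thesis using S N by (metis diff_zero mult_1_left mult_zero_left one_neq_zero)
qed


end
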